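(* Fix $T>0$. For $a\in\mathbb{R}$ with $aT<1$, let $k_u(a)$ denote the unique solution $k>|a|$ of $$T\sqrt{k^2-a^2}=\arccos\!\left(\frac{a}{k}\right).$$ Then $a\mapsto k_u(a)$ is decreasing and convex on $(-\infty,1/T)$, and $$\lim_{a\to-\infty}\frac{k_u(a)}{|a|}=1,\qquad \lim_{a\to 1/T}k_u(a)=\frac1T .$$
   Context: Consider the scalar retarded system $\dot x(t)=a x(t)-k x(t-T)$ with $a,k\in\mathbb{R}$ and constant delay $T>0$. For $aT<1$, the set of gains $k$ for which this system is exponentially stable is exactly the open interval $(a,k_u)$, where $k_u$ is defined as in the claim. (For $aT\ge 1$ no stabilizing $k$ exists.) *)

theory Defs
  imports "HOL-Analysis.Analysis"
begin

definition ku :: "real \<Rightarrow> real \<Rightarrow> real" where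
  "ku T a = (THE k. \<bar>a\<bar> < k \<and> T * sqrt (k\<^sup>2 - a\<^sup>2) = arccos (a / k))"

end

theory Submission
  imports Defs "HOL-Real_Asymp.Real_Asymp"
begin

definition AA :: "real \<Rightarrow> real \<Rightarrow> real" where "AA T t = t * cos t / (T * sin t)"
definition KK :: "real \<Rightarrow> real \<Rightarrow> real" where "KK T t = t / (T * sin t)"

lemma N_pos:
  assumes "0 < t" "t \<le> pi" shows "sin t - t * cos t > 0"
proof -
  have "(\<lambda>x. sin x - x * cos x) 0 < (\<lambda>x. sin x - x * cos x) t"
  proof (rule DERIV_pos_imp_increasing_open[OF assms(1)])
    fix x assume x: "0 < x" "x < t"
    have "((\<lambda>x. sin x - x * cos x) has_real_derivative x * sin x) (at x)"
      by (auto intro!: derivative_eq_intros)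
    moreover have "x * sin x > 0" using x assms sin_gt_zero[of x] by simp
    ultimately show "\<exists>y. ((\<lambda>x. sin x - x * cos x) has_real_derivative y) (at x) \<and> y > 0" by blast
  qed (auto intro!: continuous_intros)
  then show ?thesis by simp
qed

lemma D_pos:
  assumes "0 < t" "t \<le> pi" shows "t - sin t * cos t > 0"
proof -
  have "(\<lambda>x. x - sin x * cos x) 0 < (\<lambda>x. x - sin x * cos x) t"
  proof (rule DERIV_pos_imp_increasing_open[OF assms(1)])
    fix x assume x: "0 < x" "x < t"
    have "((\<lambda>x. x - sin x * cos x) has_real_derivative 2 * (sin x)^2) (at x)"
      apply (rule derivative_eq_intros refl)+
      using sin_cos_squared_add3[of x] by algebra
    moreover have "2 * (sin x)^2 > 0" using x assms sin_gt_zero[of x] by simp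
    ultimately show "\<exists>y. ((\<lambda>x. x - sin x * cos x) has_real_derivative y) (at x) \<and> y > 0" by blast
  qed (auto intro!: continuous_intros)
  then show ?thesis by simp
qed

lemma h1_pos:
  assumes "0 < t" "t \<le> pi" shows "2*t + t * ((cos t)^2 - (sin t)^2) - 3 * sin t * cos t > 0"
proof -
  let ?f = "\<lambda>t. 2*t + t * ((cos t)^2 - (sin t)^2) - 3 * sin t * cos t"
  have "?f 0 < ?f t"
  proof (rule DERIV_pos_imp_increasing_open[OF assms(1)])
    fix x assume x: "0 < x" "x < t"
    have "(?f has_real_derivative 4 * sin x * (sin x - x * cos x)) (at x)"
      apply (rule derivative_eq_intros refl)+
      apply (simp add: power2_eq_square)
      using sin_cos_squared_add3[of x] by algebra
    moreover have "4 * sin x * (sin x - x * cos x) > 0" using x assms N_pos[of x] by (simp add: sin_gt_zero)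
    ultimately show "\<exists>y. (?f has_real_derivative y) (at x) \<and> y > 0" by blast
  qed (auto intro!: continuous_intros)
  then show ?thesis by simp
qed

lemma h_pos:
  assumes "0 < t" "t \<le> pi" shows "t^2 + t * sin t * cos t - 2 * (sin t)^2 > 0"
proof -
  let ?f = "\<lambda>t. t^2 + t * sin t * cos t - 2 * (sin t)^2"
  have "?f 0 < ?f t"
  proof (rule DERIV_pos_imp_increasing_open[OF assms(1)])
    fix x assume x: "0 < x" "x < t"
    have "(?f has_real_derivative 2*x + x * ((cos x)^2 - (sin x)^2) - 3 * sin x * cos x) (at x)"
      apply (rule derivative_eq_intros refl)+
      by (simp add: power2_eq_square algebra_simps)
    moreover have "2*x + x * ((cos x)^2 - (sin x)^2) - 3 * sin x * cos x > 0" using x assms h1_pos[of x] by simp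
    ultimately show "\<exists>y. (?f has_real_derivative y) (at x) \<and> y > 0" by blast
  qed (auto intro!: continuous_intros)
  then show ?thesis by simp
qed

lemma g_mono:
  assumes "0 < x" "x < y" "y < pi"
  shows "(sin x - x * cos x) / (x - sin x * cos x) < (sin y - y * cos y) / (y - sin y * cos y)"
proof -
  let ?f = "\<lambda>t. (sin t - t * cos t) / (t - sin t * cos t)"
  show ?thesis
  proof (rule DERIV_pos_imp_increasing[OF assms(2)])
    fix z assume z: "x \<le> z" "z \<le> y"
    have D: "z - sin z * cos z > 0" using D_pos[of z] z assms by simp
    have "(?f has_real_derivative sin z * (z^2 + z * sin z * cos z - 2 * (sin z)^2) / (z - sin z * cos z)^2) (at z)"
      apply (rule derivative_eq_intros refl)+
      using D apply simp
      using D apply (simp add: power2_eq_square divide_simps)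
      using sin_cos_squared_add3[of z] by algebra
    moreover have "sin z * (z^2 + z * sin z * cos z - 2 * (sin z)^2) / (z - sin z * cos z)^2 > 0"
      using h_pos[of z] D z assms by (simp add: sin_gt_zero)
    ultimately show "\<exists>d. (?f has_real_derivative d) (at z) \<and> d > 0" by blast
  qed
qed

lemma AA_deriv:
  assumes "T > 0" "0 < t" "t < pi"
  shows "(AA T has_real_derivative (- (t - sin t * cos t) / (T * (sin t)^2))) (at t)"
proof -
  have s: "sin t > 0" using assms sin_gt_zero by auto
  show ?thesis unfolding AA_def
    apply (rule derivative_eq_intros refl)+
    using s assms apply simp
    using s assms apply (simp add: power2_eq_square divide_simps)
    using sin_cos_squared_add3[of t] by algebra
qed

lemma KK_deriv:
  assumes "T > 0" "0 < t" "t < pi"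
  shows "(KK T has_real_derivative ((sin t - t * cos t) / (T * (sin t)^2))) (at t)"
proof -
  have s: "sin t > 0" using assms sin_gt_zero by auto
  show ?thesis unfolding KK_def
    apply (rule derivative_eq_intros refl)+
    using s assms apply simp
    using s assms apply (simp add: power2_eq_square divide_simps)
    by algebra
qed

lemma AA_dec:
  assumes "T > 0" "0 < x" "x < y" "y < pi"
  shows "AA T y < AA T x"
proof (rule DERIV_neg_imp_decreasing[OF assms(3)])
  fix z assume z: "x \<le> z" "z \<le> y"
  have "- (z - sin z * cos z) / (T * (sin z)^2) < 0"
    using D_pos[of z] z assms sin_gt_zero[of z] by (simp add: divide_neg_pos)
  then show "\<exists>d. (AA T has_real_derivative d) (at z) \<and> d < 0"
    using AA_deriv[of T z] z assms by auto
qed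

lemma KK_inc:
  assumes "T > 0" "0 < x" "x < y" "y < pi"
  shows "KK T x < KK T y"
proof (rule DERIV_pos_imp_increasing[OF assms(3)])
  fix z assume z: "x \<le> z" "z \<le> y"
  have "(sin z - z * cos z) / (T * (sin z)^2) > 0"
    using N_pos[of z] z assms sin_gt_zero[of z] by simp
  then show "\<exists>d. (KK T has_real_derivative d) (at z) \<and> d > 0"
    using KK_deriv[of T z] z assms by auto
qed

lemma AA_cont: "T > 0 \<Longrightarrow> 0 < t \<Longrightarrow> t < pi \<Longrightarrow> isCont (AA T) t"
  using AA_deriv DERIV_isCont by blast

lemma AA_lim0: "T > 0 \<Longrightarrow> (AA T \<longlongrightarrow> 1 / T) (at_right 0)"
proof -
  assume T: "T > 0"
  have "((\<lambda>x::real. x * cos x / sin x) \<longlongrightarrow> 1) (at_right 0)" by real_asymp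
  then have "((\<lambda>x::real. (x * cos x / sin x) / T) \<longlongrightarrow> 1 / T) (at_right 0)"
    by (intro tendsto_divide tendsto_const) (use T in auto)
  then show ?thesis unfolding AA_def by (simp add: field_simps)
qed

lemma AA_limpi: "T > 0 \<Longrightarrow> filterlim (AA T) at_bot (at_left pi)"
proof -
  assume T: "T > 0"
  have "filterlim (\<lambda>t::real. (pi - t) * cos (pi - t) / sin (pi - t)) at_bot (at_right 0)"
    by (simp, real_asymp)
  then have "filterlim (\<lambda>t::real. (1/T) * ((pi - t) * cos (pi - t) / sin (pi - t))) at_bot (at_right 0)"
    using T by (intro filterlim_tendsto_pos_mult_at_bot[OF tendsto_const]) auto
  then have "filterlim (\<lambda>t::real. AA T (pi - t)) at_bot (at_right 0)"
    unfolding AA_def by (simp add: field_simps)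
  then have "filterlim (\<lambda>x. AA T (-x)) at_bot (at_right (-pi))"
    unfolding at_right_to_0[of "-pi"] filterlim_filtermap by simp
  then show ?thesis
    by (simp add: filterlim_at_left_to_right[where a=pi])
qed

lemma AA_surj:
  assumes T: "T > 0" and a: "a < 1 / T"
  shows "\<exists>t. 0 < t \<and> t < pi \<and> AA T t = a"
proof -
  have "eventually (\<lambda>t. a < AA T t) (at_right 0)"
    using order_tendstoD(1)[OF AA_lim0[OF T] a] .
  moreover have "eventually (\<lambda>t. t \<in> {0<..<pi}) (at_right 0)"
    by (rule eventually_at_right_real) simp
  ultimately have "eventually (\<lambda>t. a < AA T t \<and> t \<in> {0<..<pi}) (at_right 0)"
    by (rule eventually_conj)
  then obtain t1 where t1: "a < AA T t1" "0 < t1" "t1 < pi"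
    using eventually_happens'[of "at_right (0::real)"] by auto
  have "eventually (\<lambda>t. AA T t \<le> a) (at_left pi)"
    using AA_limpi[OF T] unfolding filterlim_at_bot by blast
  moreover have "eventually (\<lambda>t. t \<in> {t1<..<pi}) (at_left pi)"
    by (rule eventually_at_left_real) (use t1 in simp)
  ultimately have "eventually (\<lambda>t. AA T t \<le> a \<and> t \<in> {t1<..<pi}) (at_left pi)"
    by (rule eventually_conj)
  then obtain t2 where t2: "AA T t2 \<le> a" "t1 < t2" "t2 < pi"
    using eventually_happens'[of "at_left pi"] by auto
  have "continuous_on {t1..t2} (AA T)"
    using t1 t2 by (intro continuous_at_imp_continuous_on ballI AA_cont[OF T]) auto
  then obtain t where "t1 \<le> t" "t \<le> t2" "AA T t = a"
    using IVT2'[of "AA T" t2 a t1] t1 t2 by auto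
  then show ?thesis using t1 t2 by (intro exI[of _ t]) auto
qed

lemma AA_inj:
  assumes "T > 0" "0 < x" "x < pi" "0 < y" "y < pi" "AA T x = AA T y"
  shows "x = y"
  using AA_dec[of T x y] AA_dec[of T y x] assms by (cases x y rule: linorder_cases) auto

definition Th :: "real \<Rightarrow> real \<Rightarrow> real" where
  "Th T a = (THE t. 0 < t \<and> t < pi \<and> AA T t = a)"

lemma Th_prop:
  assumes "T > 0" "a < 1 / T"
  shows "0 < Th T a \<and> Th T a < pi \<and> AA T (Th T a) = a"
proof -
  have "\<exists>!t. 0 < t \<and> t < pi \<and> AA T t = a"
    using AA_surj[OF assms] AA_inj[OF assms(1)] by metis
  then show ?thesis unfolding Th_def by (rule theI')
qed

lemma Th_AA:
  assumes "T > 0" "0 < t" "t < pi"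
  shows "Th T (AA T t) = t"
  unfolding Th_def
  by (rule the_equality) (use assms AA_inj[OF assms(1)] in auto)

lemma AA_lt: 
  assumes "T > 0" "0 < t" "t < pi"
  shows "AA T t < 1 / T"
proof -
  have s: "sin t > 0" using assms sin_gt_zero by auto
  have "t * cos t < sin t" using N_pos[of t] assms by simp
  then show ?thesis using s assms unfolding AA_def by (simp add: divide_simps)
qed

lemma pred_KK:
  assumes T: "T > 0" and t: "0 < t" "t < pi"
  shows "\<bar>AA T t\<bar> < KK T t \<and> T * sqrt ((KK T t)\<^sup>2 - (AA T t)\<^sup>2) = arccos (AA T t / KK T t)"
proof -
  have s: "sin t > 0" using t sin_gt_zero by auto
  have Kp: "KK T t > 0" using s T t unfolding KK_def by simp
  have AK: "AA T t = KK T t * cos t" unfolding AA_def KK_def by simp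
  have c2: "(cos t)^2 < 1"
  proof -
    have "(sin t)^2 > 0" using s by simp
    then show ?thesis using sin_cos_squared_add[of t] by linarith
  qed
  then have c: "\<bar>cos t\<bar> < 1" by (simp add: abs_square_less_1)
  have "\<bar>AA T t\<bar> < KK T t" using AK Kp c by (simp add: abs_mult)
  moreover have "(KK T t)\<^sup>2 - (AA T t)\<^sup>2 = (KK T t * sin t)^2"
  proof -
    have "(KK T t)\<^sup>2 - (AA T t)\<^sup>2 = (KK T t)^2 * (1 - (cos t)^2)" using AK by (simp add: power_mult_distrib algebra_simps)
    also have "1 - (cos t)^2 = (sin t)^2" using sin_cos_squared_add[of t] by linarith
    finally show ?thesis by (simp add: power_mult_distrib)
  qed
  then have "sqrt ((KK T t)\<^sup>2 - (AA T t)\<^sup>2) = KK T t * sin t" using Kp s by simp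
  moreover have "T * (KK T t * sin t) = t" using s T unfolding KK_def by simp
  moreover have "arccos (AA T t / KK T t) = t" using AK Kp t arccos_cos[of t] by simp
  ultimately show ?thesis by simp
qed

lemma pred_unique:
  assumes T: "T > 0" and h: "\<bar>a\<bar> < k" "T * sqrt (k\<^sup>2 - a\<^sup>2) = arccos (a / k)"
  shows "0 < arccos (a / k) \<and> arccos (a / k) < pi \<and> k = KK T (arccos (a / k)) \<and> a = AA T (arccos (a / k))"
proof -
  define t where "t = arccos (a / k)"
  have k: "k > 0" using h by simp
  have ak: "-1 < a / k" "a / k < 1" using h k by (auto simp: divide_simps abs_less_iff)
  have t: "0 < t" "t < pi" using arccos_lt_bounded[OF ak] unfolding t_def by auto
  have ct: "cos t = a / k" unfolding t_def using ak by simp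
  have st: "sin t = sqrt (1 - (a/k)^2)" unfolding t_def using ak sin_arccos by simp
  have "k\<^sup>2 - a\<^sup>2 = k^2 * (1 - (a/k)^2)" using k by (simp add: field_simps)
  then have "sqrt (k\<^sup>2 - a\<^sup>2) = k * sin t" using k st by (simp add: real_sqrt_mult)
  then have e: "T * k * sin t = t" using h(2) unfolding t_def by simp
  have s: "sin t > 0" using t sin_gt_zero by auto
  have kK: "k = KK T t" using e s T unfolding KK_def by (simp add: field_simps)
  have "a = AA T t" using ct kK k s t T unfolding AA_def KK_def by (simp add: field_simps)
  then show ?thesis using t kK unfolding t_def by simp
qed

lemma ku_eq:
  assumes T: "T > 0" and a: "a < 1 / T"
  shows "ku T a = KK T (Th T a)"
  unfolding ku_def
proof (rule the_equality)
  have th: "0 < Th T a" "Th T a < pi" "AA T (Th T a) = a" using Th_prop[OF T a] by auto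
  show "\<bar>a\<bar> < KK T (Th T a) \<and> T * sqrt ((KK T (Th T a))\<^sup>2 - a\<^sup>2) = arccos (a / KK T (Th T a))"
    using pred_KK[OF T th(1,2)] th(3) by simp
next
  fix k assume "\<bar>a\<bar> < k \<and> T * sqrt (k\<^sup>2 - a\<^sup>2) = arccos (a / k)"
  then have u: "0 < arccos (a / k) \<and> arccos (a / k) < pi \<and> k = KK T (arccos (a / k)) \<and> a = AA T (arccos (a / k))"
    using pred_unique[OF T] by blast
  then have "Th T a = arccos (a / k)" using Th_AA[OF T] by metis
  then show "k = KK T (Th T a)" using u by simp
qed

lemma Th_dec:
  assumes T: "T > 0" and "x < y" "y < 1 / T"
  shows "Th T y < Th T x"
proof -
  have x: "0 < Th T x" "Th T x < pi" "AA T (Th T x) = x" using Th_prop[OF T] assms by auto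
  have y: "0 < Th T y" "Th T y < pi" "AA T (Th T y) = y" using Th_prop[OF T] assms by auto
  show ?thesis
  proof (rule ccontr)
    assume "\<not> Th T y < Th T x"
    then have "Th T x = Th T y \<or> Th T x < Th T y" by auto
    then show False
    proof
      assume "Th T x = Th T y" then have "x = y" using x(3) y(3) by metis
      then show False using assms by simp
    next
      assume "Th T x < Th T y" then show False using AA_dec[OF T x(1) _ y(2)] x y assms by auto
    qed
  qed
qed

lemma Th_deriv:
  assumes T: "T > 0" and a: "a < 1 / T"
  shows "(Th T has_real_derivative inverse (- (Th T a - sin (Th T a) * cos (Th T a)) / (T * (sin (Th T a))^2))) (at a)"
proof -
  define t where "t = Th T a"
  have th: "0 < t" "t < pi" "AA T t = a" using Th_prop[OF T a] unfolding t_def by auto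
  have zz: "0 < z \<and> z < pi" if "\<bar>z - t\<bar> \<le> min (t/2) ((pi - t)/2)" for z
  proof -
    have "\<bar>z - t\<bar> \<le> t/2" "\<bar>z - t\<bar> \<le> (pi - t)/2" using that by auto
    then have z1: "0 < z" using th by arith
    have "z - t \<le> (pi - t)/2" using \<open>\<bar>z - t\<bar> \<le> (pi - t)/2\<close> by (rule abs_le_D1)
    then have z2: "z < pi" using th by (simp add: field_simps)
    show ?thesis using z1 z2 by simp
  qed
  have cont: "isCont (Th T) (AA T t)"
  proof (rule isCont_inverse_function[where f = "AA T" and x = t and d = "min (t/2) ((pi - t)/2)"])
    show "0 < min (t/2) ((pi - t)/2)" using th by simp
  next
    fix z assume "\<bar>z - t\<bar> \<le> min (t/2) ((pi - t)/2)"
    then show "Th T (AA T z) = z" using Th_AA[OF T] zz by blast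
  next
    fix z assume "\<bar>z - t\<bar> \<le> min (t/2) ((pi - t)/2)"
    then show "isCont (AA T) z" using AA_cont[OF T] zz by blast
  qed
  have "(Th T has_real_derivative inverse (- (t - sin t * cos t) / (T * (sin t)^2))) (at a)"
  proof (rule DERIV_inverse_function[where a = "a - 1" and b = "1 / T" and f = "AA T"])
    show "(AA T has_real_derivative - (t - sin t * cos t) / (T * (sin t)^2)) (at (Th T a))"
      using AA_deriv[OF T th(1,2)] unfolding t_def .
    show "- (t - sin t * cos t) / (T * (sin t)^2) \<noteq> 0"
      using D_pos[of t] th sin_gt_zero[of t] T by simp
    show "a - 1 < a" by simp
    show "a < 1 / T" using a .
    fix y assume "a - 1 < y" "y < 1 / T"
    then show "AA T (Th T y) = y" using Th_prop[OF T] by auto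
  next
    show "isCont (Th T) a" using cont th by simp
  qed
  then show ?thesis unfolding t_def .
qed

lemma ku_deriv:
  assumes T: "T > 0" and a: "a < 1 / T"
  shows "(ku T has_real_derivative - ((sin (Th T a) - Th T a * cos (Th T a)) / (Th T a - sin (Th T a) * cos (Th T a)))) (at a)"
proof -
  define t where "t = Th T a"
  have th: "0 < t" "t < pi" "AA T t = a" using Th_prop[OF T a] unfolding t_def by auto
  have s: "sin t > 0" using th sin_gt_zero by auto
  have D: "t - sin t * cos t > 0" using D_pos[of t] th by simp
  have "((\<lambda>x. KK T (Th T x)) has_real_derivative
        ((sin t - t * cos t) / (T * (sin t)^2)) * inverse (- (t - sin t * cos t) / (T * (sin t)^2))) (at a)"
    using DERIV_chain2[OF KK_deriv[OF T th(1,2)[unfolded t_def]] Th_deriv[OF T a]] unfolding t_def .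
  moreover have "((sin t - t * cos t) / (T * (sin t)^2)) * inverse (- (t - sin t * cos t) / (T * (sin t)^2))
      = - ((sin t - t * cos t) / (t - sin t * cos t))"
    using s D T by (simp add: field_simps)
  ultimately have "((\<lambda>x. KK T (Th T x)) has_real_derivative - ((sin t - t * cos t) / (t - sin t * cos t))) (at a)"
    by simp
  then have "(ku T has_real_derivative - ((sin t - t * cos t) / (t - sin t * cos t))) (at a)"
    by (rule has_field_derivative_transform_within_open[where S = "{..<1/T}"]) (use a ku_eq[OF T] in auto)
  then show ?thesis unfolding t_def .
qed

lemma KK_lim0: "T > 0 \<Longrightarrow> (KK T \<longlongrightarrow> 1 / T) (at_right 0)"
proof -
  assume T: "T > 0"
  have "((\<lambda>x::real. x / sin x) \<longlongrightarrow> 1) (at_right 0)" by real_asymp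
  then have "((\<lambda>x::real. (x / sin x) / T) \<longlongrightarrow> 1 / T) (at_right 0)"
    by (intro tendsto_divide tendsto_const) (use T in auto)
  then show ?thesis unfolding KK_def by (simp add: field_simps)
qed

theorem proposition1:
  fixes T :: real
  assumes "T > 0"
  shows "(\<forall>a. a * T < 1 \<longrightarrow>
            (\<exists>!k. \<bar>a\<bar> < k \<and> T * sqrt (k\<^sup>2 - a\<^sup>2) = arccos (a / k)))
       \<and> (\<forall>x y. x < y \<and> y < 1 / T \<longrightarrow> ku T y < ku T x)
       \<and> convex_on {..<1 / T} (ku T)
       \<and> ((\<lambda>a. ku T a / \<bar>a\<bar>) \<longlongrightarrow> 1) at_bot
       \<and> (ku T \<longlongrightarrow> 1 / T) (at_left (1 / T))"
proof (intro conjI allI impI)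
  have T: "T > 0" by fact
  fix a assume "a * T < 1"
  then have a: "a < 1 / T" using T by (simp add: field_simps)
  have th: "0 < Th T a" "Th T a < pi" "AA T (Th T a) = a" using Th_prop[OF T a] by auto
  show "\<exists>!k. \<bar>a\<bar> < k \<and> T * sqrt (k\<^sup>2 - a\<^sup>2) = arccos (a / k)"
  proof (rule ex1I[of _ "KK T (Th T a)"])
    show "\<bar>a\<bar> < KK T (Th T a) \<and> T * sqrt ((KK T (Th T a))\<^sup>2 - a\<^sup>2) = arccos (a / KK T (Th T a))"
      using pred_KK[OF T th(1,2)] th(3) by simp
  next
    fix k assume "\<bar>a\<bar> < k \<and> T * sqrt (k\<^sup>2 - a\<^sup>2) = arccos (a / k)"
    then have u: "0 < arccos (a / k) \<and> arccos (a / k) < pi \<and> k = KK T (arccos (a / k)) \<and> a = AA T (arccos (a / k))"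
      using pred_unique[OF T] by blast
    then have "Th T a = arccos (a / k)" using Th_AA[OF T] by metis
    then show "k = KK T (Th T a)" using u by simp
  qed
next
  have T: "T > 0" by fact
  fix x y assume xy: "x < y \<and> y < 1 / T"
  have "Th T y < Th T x" using Th_dec[OF T] xy by auto
  moreover have "0 < Th T y" "Th T x < pi" using Th_prop[OF T] xy by auto
  ultimately show "ku T y < ku T x" using KK_inc[OF T] ku_eq[OF T] xy by auto
next
  have T: "T > 0" by fact
  show "convex_on {..<1 / T} (ku T)"
  proof (rule convex_on_realI[where f' = "\<lambda>a. - ((sin (Th T a) - Th T a * cos (Th T a)) / (Th T a - sin (Th T a) * cos (Th T a)))"])
    show "connected {..<1 / T}" by simp
  next
    fix x assume "x \<in> {..<1 / T}"
    then show "(ku T has_real_derivative - ((sin (Th T x) - Th T x * cos (Th T x)) / (Th T x - sin (Th T x) * cos (Th T x)))) (at x)"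
      using ku_deriv[OF T] by auto
  next
    fix x y assume xy: "x \<in> {..<1 / T}" "y \<in> {..<1 / T}" "x \<le> y"
    show "- ((sin (Th T x) - Th T x * cos (Th T x)) / (Th T x - sin (Th T x) * cos (Th T x)))
        \<le> - ((sin (Th T y) - Th T y * cos (Th T y)) / (Th T y - sin (Th T y) * cos (Th T y)))"
    proof (cases "x = y")
      case False
      then have "Th T y < Th T x" using Th_dec[OF T] xy by auto
      moreover have "0 < Th T y" "Th T x < pi" using Th_prop[OF T] xy by auto
      ultimately show ?thesis using g_mono[of "Th T y" "Th T x"] by simp
    qed simp
  qed
next
  have T: "T > 0" by fact
  have lim: "(Th T \<longlongrightarrow> pi) at_bot"
  proof (rule order_tendstoI)
    fix y assume y: "y < pi"
    show "eventually (\<lambda>a. y < Th T a) at_bot"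
    proof (cases "y \<le> 0")
      case True
      show ?thesis
      proof (rule eventually_at_bot_linorderI[of "1/T - 1"])
        fix x :: real assume "x \<le> 1/T - 1"
        then have "0 < Th T x" using Th_prop[OF T, of x] by simp
        then show "y < Th T x" using True by simp
      qed
    next
      case False
      show ?thesis
      proof (rule eventually_at_bot_linorderI[of "min (1/T - 1) (AA T y - 1)"])
        fix a assume a: "a \<le> min (1/T - 1) (AA T y - 1)"
        have th: "0 < Th T a" "Th T a < pi" "AA T (Th T a) = a" using Th_prop[OF T] a by auto
        show "y < Th T a"
        proof (rule ccontr)
          assume "\<not> y < Th T a"
          then have "Th T a = y \<or> Th T a < y" by auto
          then show False using AA_dec[OF T th(1) _ y] th a by auto
        qed
      qed
    qed
  next
    fix y assume y: "y > pi"
    show "eventually (\<lambda>a. Th T a < y) at_bot"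
    proof (rule eventually_at_bot_linorderI[of "1/T - 1"])
      fix x :: real assume "x \<le> 1/T - 1"
      then have "Th T x < pi" using Th_prop[OF T, of x] by simp
      then show "Th T x < y" using y by simp
    qed
  qed
  have c: "isCont (\<lambda>t. 1 / \<bar>cos t\<bar>) pi" by (intro continuous_intros) simp
  have "((\<lambda>a. 1 / \<bar>cos (Th T a)\<bar>) \<longlongrightarrow> 1 / \<bar>cos pi\<bar>) at_bot"
    using isCont_tendsto_compose[OF c lim] .
  then have l: "((\<lambda>a. 1 / \<bar>cos (Th T a)\<bar>) \<longlongrightarrow> 1) at_bot" by simp
  have ev: "eventually (\<lambda>a. 1 / \<bar>cos (Th T a)\<bar> = ku T a / \<bar>a\<bar>) at_bot"
  proof (rule eventually_at_bot_linorderI[of "-1"])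
    fix a :: real assume a: "a \<le> -1"
    then have a': "a < 1 / T" using T by (smt (verit) divide_pos_pos)
    define t where "t = Th T a"
    have th: "0 < t" "t < pi" "AA T t = a" using Th_prop[OF T a'] unfolding t_def by auto
    have s: "sin t > 0" using th sin_gt_zero by auto
    have Kp: "KK T t > 0" using s T th unfolding KK_def by simp
    have AK: "a = KK T t * cos t" using th(3) unfolding AA_def KK_def by simp
    have "cos t \<noteq> 0" using AK a by auto
    then have "ku T a / \<bar>a\<bar> = 1 / \<bar>cos t\<bar>"
      using ku_eq[OF T a'] AK Kp unfolding t_def[symmetric] by (simp add: abs_mult)
    then show "1 / \<bar>cos (Th T a)\<bar> = ku T a / \<bar>a\<bar>" unfolding t_def by simp
  qed
  show "((\<lambda>a. ku T a / \<bar>a\<bar>) \<longlongrightarrow> 1) at_bot"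
    using tendsto_cong[OF ev] l by blast
next
  have T: "T > 0" by fact
  have lim: "(Th T \<longlongrightarrow> 0) (at_left (1 / T))"
  proof (rule order_tendstoI)
    fix y :: real assume y: "y < 0"
    have "eventually (\<lambda>a. a \<in> {0<..<1/T}) (at_left (1 / T))"
      by (rule eventually_at_left_real) (use T in simp)
    then show "eventually (\<lambda>a. y < Th T a) (at_left (1 / T))"
      by eventually_elim (use Th_prop[OF T] y in force)
  next
    fix y :: real assume y: "y > 0"
    show "eventually (\<lambda>a. Th T a < y) (at_left (1 / T))"
    proof (cases "y < pi")
      case False
      have "eventually (\<lambda>a. a \<in> {0<..<1/T}) (at_left (1 / T))"
        by (rule eventually_at_left_real) (use T in simp)
      then show ?thesis
        by eventually_elim (use Th_prop[OF T] False in force)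
    next
      case True
      have "eventually (\<lambda>a. a \<in> {AA T y<..<1/T}) (at_left (1 / T))"
        by (rule eventually_at_left_real) (use AA_lt[OF T y True] in simp)
      then show ?thesis
      proof eventually_elim
        fix a assume a: "a \<in> {AA T y<..<1/T}"
        have th: "0 < Th T a" "Th T a < pi" "AA T (Th T a) = a" using Th_prop[OF T] a by auto
        show "Th T a < y"
        proof (rule ccontr)
          assume "\<not> Th T a < y"
          then have "Th T a = y \<or> y < Th T a" by auto
          then show False using AA_dec[OF T y _ th(2)] th a by auto
        qed
      qed
    qed
  qed
  have "filterlim (Th T) (at_right 0) (at_left (1 / T))"
    unfolding filterlim_at
  proof
    have "eventually (\<lambda>a. a \<in> {0<..<1/T}) (at_left (1 / T))"
      by (rule eventually_at_left_real) (use T in simp)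
    then show "eventually (\<lambda>a. Th T a \<in> {0<..} \<and> Th T a \<noteq> 0) (at_left (1 / T))"
      by eventually_elim (use Th_prop[OF T] in force)
  qed (rule lim)
  then have l: "((\<lambda>a. KK T (Th T a)) \<longlongrightarrow> 1 / T) (at_left (1 / T))"
    using filterlim_compose[OF KK_lim0[OF T]] by blast
  have ev: "eventually (\<lambda>a. KK T (Th T a) = ku T a) (at_left (1 / T))"
  proof -
    have "eventually (\<lambda>a. a \<in> {0<..<1/T}) (at_left (1 / T))"
      by (rule eventually_at_left_real) (use T in simp)
    then show ?thesis by eventually_elim (use ku_eq[OF T] in auto)
  qed
  show "(ku T \<longlongrightarrow> 1 / T) (at_left (1 / T))"
    using tendsto_cong[OF ev] l by blast
qed

end
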